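(* There is an $F_\sigma$ ideal $\mathcal I_0$ on $\omega$ such that $\mathcal I\le_{RK}^+\mathcal I_0$ for every $F_\sigma$ ideal $\mathcal I$ on $\omega$.
   Context: An ideal on $\omega$ is a set $\mathcal I\subseteq\mathcal P(\omega)$ closed under finite unions and under taking subsets. $\mathcal P(\omega)$ is topologized via the identification of subsets with characteristic functions in $2^\omega$ (product topology). For ideals $\mathcal I,\mathcal J$ on $\omega$, $\mathcal I\le_{RK}^+\mathcal J$ means there exist $A\subseteq\omega$ and a function $\beta:A\to\omega$ such that for every $x\subseteq\omega$, $x\in\mathcal I\iff\beta^{-1}(x)\in\mathcal J$. *)

theory Defs
  imports "HOL-Analysis.Analysis"
begin

definition ideal_on_omega :: "nat set set \<Rightarrow> bool" where
  "ideal_on_omega I \<longleftrightarrow> {} \<in> I \<and> (\<forall>x\<in>I. \<forall>y\<in>I. x \<union> y \<in> I) \<and> (\<forall>x\<in>I. \<forall>y. y \<subseteq> x \<longrightarrow> y \<in> I)"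

definition cantor_space :: "(nat \<Rightarrow> bool) topology" where
  "cantor_space = product_topology (\<lambda>_. discrete_topology (UNIV :: bool set)) UNIV"

definition char_fun :: "nat set \<Rightarrow> (nat \<Rightarrow> bool)" where
  "char_fun x = (\<lambda>n. n \<in> x)"

definition Fsigma_family :: "nat set set \<Rightarrow> bool" where
  "Fsigma_family I \<longleftrightarrow> fsigma_in cantor_space (char_fun ` I)"

definition Fsigma_ideal :: "nat set set \<Rightarrow> bool" where
  "Fsigma_ideal I \<longleftrightarrow> ideal_on_omega I \<and> Fsigma_family I"

definition RK_plus_le :: "nat set set \<Rightarrow> nat set set \<Rightarrow> bool" where
  "RK_plus_le I J \<longleftrightarrow> (\<exists>(A :: nat set) (\<beta> :: nat \<Rightarrow> nat).
      \<forall>x. x \<in> I \<longleftrightarrow> {n \<in> A. \<beta> n \<in> x} \<in> J)"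

end

theory Submission imports Defs "HOL-Library.Countable" "HOL-Library.Nat_Bijection" begin

abbreviation DB where "DB \<equiv> discrete_topology (UNIV::bool set)"

lemma top_cs[simp]: "topspace cantor_space = UNIV"
  by (simp add: cantor_space_def)

lemma cs_compact: "compact_space cantor_space"
  unfolding cantor_space_def
  by (simp add: compact_space_product_topology compact_space_discrete_topology)

lemma cs_haus: "Hausdorff_space cantor_space"
  unfolding cantor_space_def
  by (simp add: Hausdorff_space_product_topology)

lemma proj_cont: "continuous_map cantor_space DB (\<lambda>f. f k)"
  unfolding cantor_space_def by (rule continuous_map_product_projection) simp

lemma pair_cont: "continuous_map (prod_topology cantor_space cantor_space) DB (\<lambda>p. h (fst p k) (snd p k))"
proof -
  have "continuous_map (prod_topology cantor_space cantor_space) (prod_topology DB DB) (\<lambda>p. (fst p k, snd p k))"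
    by (intro continuous_map_pairedI continuous_map_compose[OF continuous_map_fst proj_cont, unfolded o_def]
         continuous_map_compose[OF continuous_map_snd proj_cont, unfolded o_def])
  moreover have "continuous_map (prod_topology DB DB) DB (\<lambda>q. h (fst q) (snd q))"
    by (simp flip: prod_topology_discrete_topology)
  ultimately show ?thesis using continuous_map_compose[unfolded o_def] by fastforce
qed

lemma char_fun_inj[simp]: "char_fun x = char_fun y \<longleftrightarrow> x = y"
  by (auto simp: char_fun_def fun_eq_iff)

lemma char_fun_surj: "f = char_fun {n. f n}"
  by (simp add: char_fun_def)

definition cl :: "nat set set \<Rightarrow> bool" where
  "cl S \<longleftrightarrow> closedin cantor_space (char_fun ` S)"

lemma T1:
  assumes "cl S" "\<And>n. x \<inter> {..<n} \<in> S"
  shows "x \<in> S"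
proof (rule ccontr)
  assume nx: "x \<notin> S"
  have "openin (product_topology (\<lambda>_. DB) UNIV) (UNIV - char_fun ` S)"
    using assms(1) unfolding cl_def closedin_def cantor_space_def[symmetric] by simp
  then have op: "\<forall>z \<in> UNIV - char_fun ` S. \<exists>U. finite {i \<in> UNIV. U i \<noteq> topspace DB} \<and>
                 (\<forall>i \<in> UNIV. openin DB (U i)) \<and> z \<in> Pi\<^sub>E UNIV U \<and> Pi\<^sub>E UNIV U \<subseteq> UNIV - char_fun ` S"
    by (simp only: openin_product_topology_alt)
  have "char_fun x \<in> UNIV - char_fun ` S" using nx by auto
  from op[rule_format, OF this] obtain U where U0: "finite {i \<in> UNIV. U i \<noteq> topspace DB}" and U02: "char_fun x \<in> Pi\<^sub>E UNIV U"
     and U03: "Pi\<^sub>E UNIV U \<subseteq> UNIV - char_fun ` S"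
    by (elim exE conjE)
  have U1: "finite {i. U i \<noteq> UNIV}" using U0 by (simp only: topspace_discrete_topology UNIV_I simp_thms)
  note U = U1 U02 U03
  then obtain n where n: "{i. U i \<noteq> UNIV} \<subseteq> {..<n}"
    using finite_nat_iff_bounded by blast
  have "char_fun (x \<inter> {..<n}) \<in> Pi\<^sub>E UNIV U"
  proof -
    have "char_fun (x \<inter> {..<n}) i \<in> U i" for i
    proof (cases "i < n")
      case True
      then show ?thesis using U(2) by (auto simp: char_fun_def PiE_def Pi_def)
    next
      case False
      then have "U i = UNIV" using n by auto
      then show ?thesis by simp
    qed
    then show ?thesis by (auto simp: PiE_def)
  qed
  then show False using U(3) assms(2)[of n] by auto
qed

lemma T5: "cl {y. \<forall>u. finite u \<and> u \<subseteq> y \<longrightarrow> Q u}"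
proof -
  define Z where "Z u = {f. (\<forall>i\<in>u. f i) \<longrightarrow> Q u}" for u :: "nat set"
  have eq: "char_fun ` {y. \<forall>u. finite u \<and> u \<subseteq> y \<longrightarrow> Q u} = \<Inter> (Z ` {u. finite u})"
  proof (intro set_eqI iffI)
    fix f assume "f \<in> char_fun ` {y. \<forall>u. finite u \<and> u \<subseteq> y \<longrightarrow> Q u}"
    then show "f \<in> \<Inter> (Z ` {u. finite u})" by (auto simp: Z_def char_fun_def)
  next
    fix f assume f: "f \<in> \<Inter> (Z ` {u. finite u})"
    have "{n. f n} \<in> {y. \<forall>u. finite u \<and> u \<subseteq> y \<longrightarrow> Q u}"
      using f by (auto simp: Z_def)
    then show "f \<in> char_fun ` {y. \<forall>u. finite u \<and> u \<subseteq> y \<longrightarrow> Q u}"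
      using char_fun_surj by blast
  qed
  have cz: "closedin cantor_space (Z u)" if "finite u" for u
  proof (cases "Q u")
    case True
    then have "Z u = topspace cantor_space" by (auto simp: Z_def)
    then show ?thesis by (metis closedin_topspace)
  next
    case False
    have "Z u = \<Union> ((\<lambda>i. {f \<in> topspace cantor_space. f i \<in> {False}}) ` u)"
      using False by (auto simp: Z_def)
    moreover have "closedin cantor_space {f \<in> topspace cantor_space. f i \<in> {False}}" for i
      by (rule closedin_continuous_map_preimage[OF proj_cont]) simp
    ultimately show ?thesis using that by (auto intro: closedin_Union)
  qed
  show ?thesis unfolding cl_def eq
    by (rule closedin_Inter) (use cz in auto)
qed


lemma cs_prod_compact: "compact_space (prod_topology cantor_space cantor_space)"
  using cs_compact compact_space_prod_topology by blast

lemma cl_Un: "cl S \<Longrightarrow> cl T \<Longrightarrow> cl (S \<union> T)"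
  unfolding cl_def by (simp add: image_Un closedin_Un)

lemma T2:
  assumes "cl S" "cl T"
  shows "cl {a \<union> b | a b. a \<in> S \<and> b \<in> T}"
proof -
  define g where "g = (\<lambda>p::(nat\<Rightarrow>bool)\<times>(nat\<Rightarrow>bool). \<lambda>n. fst p n \<or> snd p n)"
  have gc: "g (char_fun a, char_fun b) = char_fun (a \<union> b)" for a b
    by (auto simp: g_def char_fun_def)
  have eq: "char_fun ` {a \<union> b | a b. a \<in> S \<and> b \<in> T} = g ` (char_fun ` S \<times> char_fun ` T)"
  proof (intro set_eqI iffI)
    fix f assume "f \<in> char_fun ` {a \<union> b | a b. a \<in> S \<and> b \<in> T}"
    then obtain a b where "f = char_fun (a \<union> b)" "a \<in> S" "b \<in> T" by auto
    then show "f \<in> g ` (char_fun ` S \<times> char_fun ` T)" using gc by (metis image_eqI mem_Times_iff fst_conv snd_conv)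
  next
    fix f assume "f \<in> g ` (char_fun ` S \<times> char_fun ` T)"
    then obtain a b where "f = g (char_fun a, char_fun b)" "a \<in> S" "b \<in> T" by auto
    then show "f \<in> char_fun ` {a \<union> b | a b. a \<in> S \<and> b \<in> T}" using gc by blast
  qed
  have "continuous_map (prod_topology cantor_space cantor_space) (product_topology (\<lambda>_. DB) UNIV) g"
    by (subst continuous_map_componentwise_UNIV) (simp add: g_def pair_cont)
  then have cont: "continuous_map (prod_topology cantor_space cantor_space) cantor_space g"
    by (simp only: cantor_space_def[symmetric])
  have "compactin (prod_topology cantor_space cantor_space) (char_fun ` S \<times> char_fun ` T)"
    using assms unfolding cl_def
    by (simp add: compactin_Times closedin_compact_space cs_compact)
  then have "compactin cantor_space (g ` (char_fun ` S \<times> char_fun ` T))"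
    using image_compactin cont by blast
  then show ?thesis unfolding cl_def eq using compactin_imp_closedin cs_haus by blast
qed

lemma T3:
  assumes "cl S"
  shows "cl {y. \<exists>a\<in>S. y \<subseteq> a}"
proof -
  define R where "R = {p \<in> topspace (prod_topology cantor_space cantor_space). snd p \<in> char_fun ` S} \<inter> \<Inter> (range (\<lambda>n. {p \<in> topspace (prod_topology cantor_space cantor_space). (fst p n \<longrightarrow> snd p n) \<in> {True}}))"
  have eq: "char_fun ` {y. \<exists>a\<in>S. y \<subseteq> a} = fst ` R"
  proof (intro set_eqI iffI)
    fix f assume "f \<in> char_fun ` {y. \<exists>a\<in>S. y \<subseteq> a}"
    then obtain y a where "f = char_fun y" "a \<in> S" "y \<subseteq> a" by auto
    then have "(f, char_fun a) \<in> R" by (auto simp: R_def char_fun_def)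
    then show "f \<in> fst ` R" by force
  next
    fix f assume "f \<in> fst ` R"
    then obtain a where a: "a \<in> S" "\<forall>n. f n \<longrightarrow> char_fun a n" unfolding R_def by auto
    then have "{n. f n} \<subseteq> a" by (auto simp: char_fun_def)
    then show "f \<in> char_fun ` {y. \<exists>a\<in>S. y \<subseteq> a}" using a(1) char_fun_surj by blast
  qed
  have c1: "closedin (prod_topology cantor_space cantor_space) {p \<in> topspace (prod_topology cantor_space cantor_space). snd p \<in> char_fun ` S}"
    by (rule closedin_continuous_map_preimage[OF continuous_map_snd]) (use assms in \<open>simp add: cl_def\<close>)
  have c2: "closedin (prod_topology cantor_space cantor_space) {p \<in> topspace (prod_topology cantor_space cantor_space). (fst p n \<longrightarrow> snd p n) \<in> {True}}" for n
    by (rule closedin_continuous_map_preimage[OF pair_cont[of "(\<longrightarrow>)"]]) simp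
  have "closedin (prod_topology cantor_space cantor_space) R"
    unfolding R_def using c1 c2 by (intro closedin_Int closedin_Inter) auto
  then have "compactin (prod_topology cantor_space cantor_space) R"
    by (simp add: closedin_compact_space cs_prod_compact)
  then have "compactin cantor_space (fst ` R)"
    using image_compactin continuous_map_fst by blast
  then show ?thesis unfolding cl_def eq using compactin_imp_closedin cs_haus by blast
qed

lemma cl_empty_set: "cl {{}}"
proof -
  have "closedin cantor_space {char_fun {}}"
    using cs_haus by (simp add: closedin_Hausdorff_singleton)
  then show ?thesis by (simp add: cl_def)
qed

definition down :: "nat set set \<Rightarrow> nat set set" where
  "down S = {y. \<exists>a\<in>S. y \<subseteq> a}"
definition sup2 :: "nat set set \<Rightarrow> nat set set \<Rightarrow> nat set set" where
  "sup2 S T = {a \<union> b | a b. a \<in> S \<and> b \<in> T}"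

fun Eseq :: "(nat \<Rightarrow> nat set set) \<Rightarrow> nat \<Rightarrow> nat set set" where
  "Eseq F 0 = down (F 0)"
| "Eseq F (Suc K) = down (sup2 (Eseq F K) (Eseq F K) \<union> F (Suc K))"

lemma down_her: "a \<in> down S \<Longrightarrow> y \<subseteq> a \<Longrightarrow> y \<in> down S"
  unfolding down_def by (blast intro: order_trans)

lemma down_I: "a \<in> S \<Longrightarrow> y \<subseteq> a \<Longrightarrow> y \<in> down S"
  unfolding down_def by blast

lemma E_her: "a \<in> Eseq F K \<Longrightarrow> y \<subseteq> a \<Longrightarrow> y \<in> Eseq F K"
  by (cases K) (simp_all add: down_her)

lemma E_un: "a \<in> Eseq F K \<Longrightarrow> b \<in> Eseq F K \<Longrightarrow> a \<union> b \<in> Eseq F (Suc K)"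
proof -
  assume "a \<in> Eseq F K" "b \<in> Eseq F K"
  then have "a \<union> b \<in> sup2 (Eseq F K) (Eseq F K)" unfolding sup2_def by blast
  then show ?thesis by (simp only: Eseq.simps) (rule down_I[OF UnI1], assumption, rule order_refl)
qed

lemma E_step: "a \<in> Eseq F K \<Longrightarrow> a \<in> Eseq F (Suc K)"
  using E_un[of a F K a] by simp

lemma E_mono: "j \<le> K \<Longrightarrow> Eseq F j \<subseteq> Eseq F K"
  by (rule lift_Suc_mono_le[of "Eseq F"]) (use E_step in blast)

lemma F_E: "F K \<subseteq> Eseq F K"
proof
  fix x assume "x \<in> F K"
  then show "x \<in> Eseq F K"
    by (cases K) (simp_all only: Eseq.simps, (rule down_I, blast, rule order_refl)+)
qed

lemma E_sub:
  assumes "ideal_on_omega I" "\<And>k. F k \<subseteq> I"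
  shows "Eseq F K \<subseteq> I"
proof (induction K)
  case 0
  show ?case
  proof
    fix x assume "x \<in> Eseq F 0"
    then obtain a where "a \<in> F 0" "x \<subseteq> a" by (auto simp: down_def)
    then show "x \<in> I" using assms unfolding ideal_on_omega_def by blast
  qed
next
  case (Suc K)
  have un: "a \<union> b \<in> I" if "a \<in> I" "b \<in> I" for a b using assms(1) that unfolding ideal_on_omega_def by blast
  have hr: "y \<in> I" if "a \<in> I" "y \<subseteq> a" for a y using assms(1) that unfolding ideal_on_omega_def by blast
  have "sup2 (Eseq F K) (Eseq F K) \<union> F (Suc K) \<subseteq> I"
    using Suc un assms(2)[of "Suc K"] unfolding sup2_def by blast
  then show ?case unfolding Eseq.simps down_def using hr by blast
qed

lemma E_cl: "(\<And>k. cl (F k)) \<Longrightarrow> cl (Eseq F K)"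
proof (induction K)
  case 0
  then show ?case using T3 by (simp add: down_def)
next
  case (Suc K)
  have "cl (sup2 (Eseq F K) (Eseq F K))" unfolding sup2_def using T2 Suc by blast
  then have "cl (sup2 (Eseq F K) (Eseq F K) \<union> F (Suc K))" using cl_Un Suc by blast
  then show ?case unfolding Eseq.simps down_def by (rule T3)
qed

definition idx :: "nat \<Rightarrow> nat" where
  "idx a = fst (prod_decode (fst (prod_decode a)))"
definition code :: "nat \<Rightarrow> (nat list \<times> nat) list" where
  "code a = from_nat (snd (prod_decode (fst (prod_decode a))))"
definition ok :: "nat \<Rightarrow> nat set \<Rightarrow> bool" where
  "ok K t \<longleftrightarrow> (\<exists>ks v. (ks, v) \<in> set (code (Max t)) \<and> set ks = idx ` (t - {Max t}) \<and> v \<le> K)"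

lemma ok_mono: "ok K t \<Longrightarrow> K \<le> K' \<Longrightarrow> ok K' t"
  unfolding ok_def by fastforce

definition colok :: "nat \<Rightarrow> nat set \<Rightarrow> bool" where
  "colok K u \<longleftrightarrow> (\<exists>c. (\<forall>i\<in>u. c i < K) \<and>
      (\<forall>t. t \<subseteq> u \<and> t \<noteq> {} \<and> (\<forall>i\<in>t. \<forall>j\<in>t. c i = c j) \<longrightarrow> ok K t))"

definition H :: "nat \<Rightarrow> nat set set" where
  "H K = {y. \<forall>u. finite u \<and> u \<subseteq> y \<longrightarrow> colok K u}"

definition I0 :: "nat set set" where "I0 = (\<Union>K. H K)"

lemma H_D: "y \<in> H K \<Longrightarrow> finite u \<Longrightarrow> u \<subseteq> y \<Longrightarrow> colok K u"
  unfolding H_def by blast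

lemma H_I: "(\<And>u. finite u \<Longrightarrow> u \<subseteq> y \<Longrightarrow> colok K u) \<Longrightarrow> y \<in> H K"
  unfolding H_def by blast

lemma H_her: "y \<in> H K \<Longrightarrow> z \<subseteq> y \<Longrightarrow> z \<in> H K"
  by (meson H_D H_I order_trans)

lemma colok_mono: assumes "colok K u" shows "colok (Suc K) u"
proof -
  obtain c where c: "\<forall>i\<in>u. c i < K"
      "\<forall>t. t \<subseteq> u \<and> t \<noteq> {} \<and> (\<forall>i\<in>t. \<forall>j\<in>t. c i = c j) \<longrightarrow> ok K t"
    using assms unfolding colok_def by blast
  have "\<forall>i\<in>u. c i < Suc K" using c(1) by auto
  moreover have "\<forall>t. t \<subseteq> u \<and> t \<noteq> {} \<and> (\<forall>i\<in>t. \<forall>j\<in>t. c i = c j) \<longrightarrow> ok (Suc K) t"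
    using c(2) ok_mono[of K _ "Suc K"] by (meson le_SucI order_refl)
  ultimately show ?thesis unfolding colok_def by blast
qed

lemma H_mono: "y \<in> H K \<Longrightarrow> y \<in> H (Suc K)"
  by (meson H_D H_I colok_mono)

lemma H_empty: "{} \<in> H K"
  by (rule H_I) (auto simp: colok_def)

lemma colok_un:
  assumes a: "colok K a" and b: "colok K' b" and d: "a \<inter> b = {}"
  shows "colok (K + K') (a \<union> b)"
proof -
  obtain c1 where c1: "\<forall>i\<in>a. c1 i < K"
      "\<forall>t. t \<subseteq> a \<and> t \<noteq> {} \<and> (\<forall>i\<in>t. \<forall>j\<in>t. c1 i = c1 j) \<longrightarrow> ok K t"
    using a unfolding colok_def by blast
  obtain c2 where c2: "\<forall>i\<in>b. c2 i < K'"
      "\<forall>t. t \<subseteq> b \<and> t \<noteq> {} \<and> (\<forall>i\<in>t. \<forall>j\<in>t. c2 i = c2 j) \<longrightarrow> ok K' t"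
    using b unfolding colok_def by blast
  define c where "c i = (if i \<in> a then c1 i else K + c2 i)" for i
  have cl1: "\<forall>i\<in>a \<union> b. c i < K + K'" using c1(1) c2(1) by (auto simp: c_def)
  have cl2: "ok (K + K') t" if t: "t \<subseteq> a \<union> b" "t \<noteq> {}" "\<forall>i\<in>t. \<forall>j\<in>t. c i = c j" for t
  proof -
    obtain i0 where i0: "i0 \<in> t" using t(2) by auto
    show ?thesis
    proof (cases "i0 \<in> a")
      case True
      have ta: "t \<subseteq> a"
      proof
        fix j assume j: "j \<in> t"
        show "j \<in> a"
        proof (rule ccontr)
          assume "j \<notin> a"
          then have "c j \<ge> K" by (simp add: c_def)
          moreover have "c i0 < K" using True c1(1) by (simp add: c_def)
          moreover have "c i0 = c j" using t(3) i0 j by blast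
          ultimately show False by simp
        qed
      qed
      have "\<forall>i\<in>t. \<forall>j\<in>t. c1 i = c1 j"
      proof (intro ballI)
        fix i j assume "i \<in> t" "j \<in> t"
        then have "c i = c j" "i \<in> a" "j \<in> a" using t(3) ta by blast+
        then show "c1 i = c1 j" by (simp add: c_def)
      qed
      then have "ok K t" using c1(2) ta t(2) by blast
      then show ?thesis using ok_mono by simp
    next
      case False
      have tb: "t \<subseteq> b"
      proof
        fix j assume j: "j \<in> t"
        have "j \<notin> a"
        proof
          assume "j \<in> a"
          then have "c j < K" using c1(1) by (simp add: c_def)
          moreover have "c i0 \<ge> K" using False by (simp add: c_def)
          moreover have "c i0 = c j" using t(3) i0 j by blast
          ultimately show False by simp
        qed
        then show "j \<in> b" using t(1) j by blast
      qed
      have "\<forall>i\<in>t. \<forall>j\<in>t. c2 i = c2 j"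
      proof (intro ballI)
        fix i j assume "i \<in> t" "j \<in> t"
        then have "c i = c j" "i \<notin> a" "j \<notin> a" using t(3) tb d by blast+
        then show "c2 i = c2 j" by (simp add: c_def)
      qed
      then have "ok K' t" using c2(2) tb t(2) by blast
      then show ?thesis using ok_mono by simp
    qed
  qed
  show ?thesis unfolding colok_def using cl1 cl2 by blast
qed

lemma H_un:
  assumes y: "y \<in> H K" and z: "z \<in> H K'"
  shows "y \<union> z \<in> H (K + K')"
proof (rule H_I)
  fix u assume u: "finite u" "u \<subseteq> y \<union> z"
  have "colok K (u \<inter> y)" using H_D[OF y] u by auto
  moreover have "colok K' (u - y)" using H_D[OF z] u by auto
  ultimately have "colok (K + K') ((u \<inter> y) \<union> (u - y))" by (rule colok_un) auto
  moreover have "(u \<inter> y) \<union> (u - y) = u" by auto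
  ultimately show "colok (K + K') u" by simp
qed

lemma H_cl: "cl (H K)"
  unfolding H_def by (rule T5)

lemma I0_ideal: "ideal_on_omega I0"
  unfolding ideal_on_omega_def
proof (intro conjI ballI allI impI)
  show "{} \<in> I0" unfolding I0_def using H_empty by blast
next
  fix x y assume "x \<in> I0" "y \<in> I0"
  then obtain K K' where "x \<in> H K" "y \<in> H K'" unfolding I0_def by blast
  then have "x \<union> y \<in> H (K + K')" by (rule H_un)
  then show "x \<union> y \<in> I0" unfolding I0_def by blast
next
  fix x y assume "x \<in> I0" "y \<subseteq> x"
  then obtain K where "x \<in> H K" unfolding I0_def by blast
  then have "y \<in> H K" using H_her \<open>y \<subseteq> x\<close> by blast
  then show "y \<in> I0" unfolding I0_def by blast
qed

lemma I0_fsigma: "Fsigma_family I0"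
proof -
  have "fsigma_in cantor_space (\<Union> (range (\<lambda>K. char_fun ` H K)))"
    unfolding fsigma_in_ascending
  proof (rule exI[of _ "\<lambda>K. char_fun ` H K"], intro conjI allI)
    fix n show "closedin cantor_space (char_fun ` H n)" using H_cl[of n] by (simp add: cl_def)
  next
    fix n show "char_fun ` H n \<subseteq> char_fun ` H (Suc n)" using H_mono by blast
  qed simp
  then show ?thesis unfolding Fsigma_family_def I0_def by (simp add: image_UN)
qed

definition lev :: "(nat \<Rightarrow> nat set set) \<Rightarrow> nat set \<Rightarrow> nat" where
  "lev E s = (LEAST K. s \<in> E K)"

definition Lst :: "(nat \<Rightarrow> nat set set) \<Rightarrow> nat \<Rightarrow> (nat list \<times> nat) list" where
  "Lst E n = map (\<lambda>ks. (ks, lev E (insert n (set ks))))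
     (filter (\<lambda>ks. \<exists>K. insert n (set ks) \<in> E K) (subseqs [0..<n]))"

definition enc :: "(nat \<Rightarrow> nat set set) \<Rightarrow> nat \<Rightarrow> nat \<Rightarrow> nat" where
  "enc E n j = prod_encode (prod_encode (n, to_nat (Lst E n)), j)"

primrec emb :: "(nat \<Rightarrow> nat set set) \<Rightarrow> nat \<Rightarrow> nat" where
  "emb E 0 = enc E 0 0"
| "emb E (Suc n) = enc E (Suc n) (Suc (emb E n))"

lemma idx_enc[simp]: "idx (enc E n j) = n"
  by (simp add: idx_def enc_def)

lemma code_enc[simp]: "code (enc E n j) = Lst E n"
  by (simp add: code_def enc_def)

lemma enc_ge: "j \<le> enc E n j"
  unfolding enc_def by (rule le_prod_encode_2)

lemma emb_sm: "strict_mono (emb E)"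
proof (rule strict_mono_Suc_iff[THEN iffD2], intro allI)
  fix n show "emb E n < emb E (Suc n)" using enc_ge[of "Suc (emb E n)" E "Suc n"] by simp
qed

lemma idx_emb[simp]: "idx (emb E n) = n"
  by (cases n) simp_all

lemma code_emb[simp]: "code (emb E n) = Lst E n"
  by (cases n) simp_all

lemma okE:
  assumes mono: "\<And>j K. j \<le> K \<Longrightarrow> E j \<subseteq> E K" and s: "finite s" "s \<noteq> {}"
  shows "ok K (emb E ` s) \<longleftrightarrow> s \<in> E K"
proof -
  define n where "n = Max s"
  have sm: "strict_mono (emb E)" by (rule emb_sm)
  have ns: "n \<in> s" using s n_def by simp
  have mx: "Max (emb E ` s) = emb E n"
    using mono_Max_commute[of "emb E" s] strict_mono_mono[OF sm] s n_def by simp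
  have d: "emb E ` s - {emb E n} = emb E ` (s - {n})"
    using strict_mono_eq[OF sm] by auto
  have idd: "idx ` emb E ` (s - {n}) = s - {n}"
    by (simp add: image_image)
  have sub: "s - {n} \<subseteq> {0..<n}"
  proof
    fix x assume "x \<in> s - {n}"
    then have "x \<le> n" "x \<noteq> n" using s n_def by auto
    then show "x \<in> {0..<n}" by simp
  qed
  then have "s - {n} \<in> set ` set (subseqs [0..<n])" unfolding subseqs_powset by simp
  then obtain ks0 where ks0: "ks0 \<in> set (subseqs [0..<n])" "set ks0 = s - {n}" by blast
  have ins: "insert n (s - {n}) = s" using ns by auto
  have "ok K (emb E ` s) \<longleftrightarrow> (\<exists>ks v. (ks, v) \<in> set (Lst E n) \<and> set ks = s - {n} \<and> v \<le> K)"
    unfolding ok_def mx code_emb d idd ..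
  also have "\<dots> \<longleftrightarrow> (\<exists>ks. ks \<in> set (subseqs [0..<n]) \<and> (\<exists>K'. insert n (set ks) \<in> E K') \<and>
       set ks = s - {n} \<and> lev E (insert n (set ks)) \<le> K)"
    unfolding Lst_def by auto
  also have "\<dots> \<longleftrightarrow> (\<exists>K'. s \<in> E K') \<and> lev E s \<le> K"
  proof
    assume "\<exists>ks. ks \<in> set (subseqs [0..<n]) \<and> (\<exists>K'. insert n (set ks) \<in> E K') \<and>
       set ks = s - {n} \<and> lev E (insert n (set ks)) \<le> K"
    then obtain ks where "(\<exists>K'. insert n (set ks) \<in> E K')" "set ks = s - {n}" "lev E (insert n (set ks)) \<le> K"
      by blast
    then show "(\<exists>K'. s \<in> E K') \<and> lev E s \<le> K" using ins by simp
  next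
    assume "(\<exists>K'. s \<in> E K') \<and> lev E s \<le> K"
    then show "\<exists>ks. ks \<in> set (subseqs [0..<n]) \<and> (\<exists>K'. insert n (set ks) \<in> E K') \<and>
       set ks = s - {n} \<and> lev E (insert n (set ks)) \<le> K"
      using ks0 ins by (intro exI[of _ ks0]) simp
  qed
  also have "\<dots> \<longleftrightarrow> s \<in> E K"
  proof
    assume a: "(\<exists>K'. s \<in> E K') \<and> lev E s \<le> K"
    then have "s \<in> E (lev E s)" unfolding lev_def by (metis LeastI)
    then show "s \<in> E K" using mono a by blast
  next
    assume "s \<in> E K"
    then show "(\<exists>K'. s \<in> E K') \<and> lev E s \<le> K" unfolding lev_def by (auto intro: Least_le)
  qed
  finally show ?thesis .
qed

lemma RK_main:
  fixes F :: "nat \<Rightarrow> nat set set"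
  assumes I: "ideal_on_omega I" and Fc: "\<And>k. cl (F k)" and FI: "I = (\<Union>k. F k)"
  shows "RK_plus_le I I0"
proof -
  define E where "E = Eseq F"
  define e where "e = emb E"
  have EI: "E K \<subseteq> I" for K unfolding E_def by (rule E_sub[OF I]) (use FI in blast)
  have Emono: "\<And>j K. j \<le> K \<Longrightarrow> E j \<subseteq> E K" unfolding E_def by (rule E_mono)
  have sm: "strict_mono e" unfolding e_def by (rule emb_sm)
  have inj: "inj e" using sm by (rule strict_mono_imp_inj_on)
  have okE': "ok K (e ` s) \<longleftrightarrow> s \<in> E K" if "finite s" "s \<noteq> {}" for s K
    unfolding e_def by (rule okE[OF Emono that])
  have pre: "{m \<in> range e. inv e m \<in> x} = e ` x" for x
    using inj by (auto simp: inv_f_f)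
  have main: "x \<in> I \<longleftrightarrow> e ` x \<in> I0" for x
  proof
    assume "x \<in> I"
    then obtain k where xk: "x \<in> E k" using FI F_E unfolding E_def by blast
    have "e ` x \<in> H (Suc k)"
    proof (rule H_I)
      fix u assume u: "finite u" "u \<subseteq> e ` x"
      have "ok (Suc k) t" if t: "t \<subseteq> u" "t \<noteq> {}" for t
      proof -
        define s where "s = e -` t"
        have ts: "t = e ` s" using t u unfolding s_def by auto
        have "finite s" unfolding s_def using finite_vimageI[OF finite_subset[OF t(1) u(1)] inj] .
        moreover have "s \<noteq> {}" using ts t(2) by auto
        moreover have "s \<subseteq> x"
        proof
          fix i assume "i \<in> s"
          then have "e i \<in> e ` x" using t u unfolding s_def by auto
          then show "i \<in> x" using inj by (simp add: inj_image_mem_iff)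
        qed
        then have "s \<in> E k" using xk E_her unfolding E_def by blast
        ultimately have "ok k t" using okE' ts by simp
        then show ?thesis using ok_mono by simp
      qed
      then show "colok (Suc k) u" unfolding colok_def
        by (intro exI[of _ "\<lambda>_. 0"]) auto
    qed
    then show "e ` x \<in> I0" unfolding I0_def by blast
  next
    assume "e ` x \<in> I0"
    then obtain K where ex: "e ` x \<in> H K" unfolding I0_def by blast
    have fin: "u = {} \<or> u \<in> E (K + K)" if u: "finite u" "u \<subseteq> x" for u
    proof -
      have "colok K (e ` u)" using H_D[OF ex] u by auto
      then obtain c where c: "\<forall>i\<in>e ` u. c i < K"
        "\<forall>t. t \<subseteq> e ` u \<and> t \<noteq> {} \<and> (\<forall>i\<in>t. \<forall>j\<in>t. c i = c j) \<longrightarrow> ok K t"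
        unfolding colok_def by blast
      define uj where "uj j = {i \<in> u. c (e i) = j}" for j
      have ujE: "uj j = {} \<or> uj j \<in> E K" for j
      proof (cases "uj j = {}")
        case False
        have "e ` uj j \<subseteq> e ` u" unfolding uj_def by auto
        moreover have "\<forall>i\<in>e ` uj j. \<forall>i'\<in>e ` uj j. c i = c i'" unfolding uj_def by auto
        ultimately have "ok K (e ` uj j)" using c(2) False by blast
        moreover have "finite (uj j)" using u unfolding uj_def by auto
        ultimately show ?thesis using okE' False by blast
      qed simp
      have ind: "(\<Union>j<m. uj j) = {} \<or> (\<Union>j<m. uj j) \<in> E (K + m)" for m
      proof (induction m)
        case 0
        then show ?case by simp
      next
        case (Suc m)
        have eq: "(\<Union>j<Suc m. uj j) = (\<Union>j<m. uj j) \<union> uj m"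
          by (simp add: lessThan_Suc Un_commute)
        have sub1: "E (K + m) \<subseteq> E (K + Suc m)" and sub2: "E K \<subseteq> E (K + Suc m)"
          using Emono by auto
        have un: "a \<union> b \<in> E (K + Suc m)" if "a \<in> E (K + m)" "b \<in> E (K + m)" for a b
          using E_un[of a F "K + m" b] that unfolding E_def by simp
        show ?case
        proof (cases "(\<Union>j<m. uj j) = {}")
          case True
          then show ?thesis using eq ujE[of m] sub2 by auto
        next
          case False
          then have V: "(\<Union>j<m. uj j) \<in> E (K + m)" using Suc by blast
          show ?thesis
          proof (cases "uj m = {}")
            case True
            then show ?thesis using eq V sub1 by auto
          next
            case False
            then have "uj m \<in> E (K + m)" using ujE[of m] Emono[of K "K + m"] by auto
            then show ?thesis using eq V un by auto
          qed
        qed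
      qed
      have "u = (\<Union>j<K. uj j)" using c(1) unfolding uj_def by auto
      then show ?thesis using ind[of K] by simp
    qed
    have clS: "cl (E (K + K) \<union> {{}})"
      using cl_Un[OF E_cl[of F "K + K", OF Fc] cl_empty_set] unfolding E_def by blast
    have "x \<in> E (K + K) \<union> {{}}"
    proof (rule T1[OF clS])
      fix n show "x \<inter> {..<n} \<in> E (K + K) \<union> {{}}" using fin[of "x \<inter> {..<n}"] by auto
    qed
    moreover have "{} \<in> I" using I unfolding ideal_on_omega_def by blast
    ultimately show "x \<in> I" using EI by blast
  qed
  show ?thesis unfolding RK_plus_le_def
    by (rule exI[of _ "range e"], rule exI[of _ "inv e"]) (simp add: pre main)
qed

theorem mainTheorem17:
  shows "\<exists>I0. Fsigma_ideal I0 \<and> (\<forall>I. Fsigma_ideal I \<longrightarrow> RK_plus_le I I0)"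
proof (intro exI[of _ I0] conjI allI impI)
  show "Fsigma_ideal I0" unfolding Fsigma_ideal_def using I0_ideal I0_fsigma by blast
next
  fix I assume "Fsigma_ideal I"
  then have I: "ideal_on_omega I" and fs: "fsigma_in cantor_space (char_fun ` I)"
    unfolding Fsigma_ideal_def Fsigma_family_def by auto
  from fs[unfolded fsigma_in_ascending] obtain C where C1: "\<forall>n. closedin cantor_space (C n)"
     and C3: "\<forall>n. C n \<subseteq> C (Suc n)" and C2: "\<Union> (range C) = char_fun ` I"
    by (elim exE conjE)
  note C = C1[rule_format] C2
  define F where "F k = char_fun -` C k" for k
  have imF: "char_fun ` F k = C k" for k
  proof -
    have "surj char_fun" using char_fun_surj by (rule surjI[of _ "\<lambda>f. {n. f n}", OF sym])
    then show ?thesis unfolding F_def by (rule surj_image_vimage_eq)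
  qed
  have Fc: "cl (F k)" for k unfolding cl_def imF by (rule C(1))
  have FI: "I = (\<Union>k. F k)"
  proof (intro set_eqI iffI)
    fix x assume "x \<in> I"
    then have "char_fun x \<in> \<Union> (range C)" using C(2) by blast
    then show "x \<in> (\<Union>k. F k)" unfolding F_def by auto
  next
    fix x assume "x \<in> (\<Union>k. F k)"
    then have "char_fun x \<in> char_fun ` I" using C(2) unfolding F_def by blast
    then show "x \<in> I" by auto
  qed
  show "RK_plus_le I I0" by (rule RK_main[OF I Fc FI])
qed

end
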